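(* Let $x_1\ge x_2\ge\dots\ge x_n$ be positive integers with $\sum_{i=1}^n x_i=2n-2$. Let $p,q$ be positive integers with $p\ge q>1$ and $p+q=n+1$. Then there exist sequences of positive integers $a_1,\dots,a_p$ and $b_1,\dots,b_q$ with $\sum_{i=1}^p a_i=2p-2$ and $\sum_{i=1}^q b_i=2q-2$, such that $a_1+b_1=x_1$ and the multiset $\{a_2,\dots,a_p,b_2,\dots,b_q\}$ equals the multiset $\{x_2,\dots,x_n\}$. *)

theory Defs
  imports Main "HOL-Library.Multiset"
begin

end

theory Submission
  imports Defs
begin

lemma split_ivl:
  fixes f :: "nat \<Rightarrow> nat"
  assumes "a \<le> r + 1" "r \<le> n"
  shows "sum f {a..n} = sum f {a..r} + sum f {r+1..n}"
proof -
  have "{a..n} = {a..r} \<union> {r+1..n}" using assms by auto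
  moreover have "{a..r} \<inter> {r+1..n} = {}" by auto
  ultimately show ?thesis by (simp add: sum.union_disjoint)
qed

lemma tail_bound:
  fixes x :: "nat \<Rightarrow> nat"
  assumes pos: "\<forall>i\<in>{1..n}. x i > 0"
    and mono: "\<forall>i j. 1 \<le> i \<and> i \<le> j \<and> j \<le> n \<longrightarrow> x j \<le> x i"
    and r: "1 \<le> r" "r < n"
    and big: "(\<Sum>i=r+1..n. x i) \<ge> 2 * (n - r)"
  shows "(\<Sum>i=2..n. x i) \<ge> 2 * (n - 1)"
proof -
  have x2: "x (r+1) \<ge> 2"
  proof (rule ccontr)
    assume "\<not> 2 \<le> x (r+1)"
    have le1: "\<forall>i\<in>{r+1..n}. x i \<le> 1" proof
      fix i assume "i \<in> {r+1..n}"
      hence "x i \<le> x (r+1)" using mono r by auto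
      thus "x i \<le> 1" using \<open>\<not> 2 \<le> x (r+1)\<close> by linarith
    qed
    have "(\<Sum>i=r+1..n. x i) \<le> (\<Sum>i=r+1..n. 1)" by (rule sum_mono) (use le1 in auto)
    also have "\<dots> = n - r" by simp
    finally show False using big r by linarith
  qed
  have ge2: "\<forall>i\<in>{2..r}. x i \<ge> 2" proof
    fix i assume "i \<in> {2..r}"
    hence "x (r+1) \<le> x i" using mono r by auto
    thus "x i \<ge> 2" using x2 by linarith
  qed
  have "(\<Sum>i=2..r. x i) \<ge> (\<Sum>i=2..r. 2)" by (rule sum_mono) (use ge2 in auto)
  hence A: "(\<Sum>i=2..r. x i) \<ge> 2 * (r - 1)" by simp
  have "(\<Sum>i=2..n. x i) = (\<Sum>i=2..r. x i) + (\<Sum>i=r+1..n. x i)"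
    using r by (intro split_ivl) auto
  thus ?thesis using A big r by linarith
qed

lemma shift_mset:
  fixes f :: "nat \<Rightarrow> 'a"
  shows "image_mset (\<lambda>i. f (i + k)) (mset_set {u..v}) = image_mset f (mset_set {u+k..v+k})"
proof -
  have "image_mset (\<lambda>i. f (i + k)) (mset_set {u..v}) = image_mset f (image_mset (\<lambda>i. i + k) (mset_set {u..v}))"
    by (simp add: multiset.map_comp o_def)
  also have "image_mset (\<lambda>i. i + k) (mset_set {u..v}) = mset_set ((\<lambda>i. i + k) ` {u..v})"
    by (rule image_mset_mset_set) (auto simp: inj_on_def)
  also have "(\<lambda>i. i + k) ` {u..v} = {u+k..v+k}" by simp
  finally show ?thesis .
qed

lemma mset_split:
  fixes a r n :: nat
  assumes "a \<le> r + 1" "r \<le> n"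
  shows "mset_set {a..n} = mset_set {a..r} + mset_set {r+1..n}"
proof -
  have "{a..n} = {a..r} \<union> {r+1..n}" using assms by auto
  thus ?thesis by (simp add: mset_set_Union)
qed

theorem lemma2:
  fixes x :: "nat \<Rightarrow> nat" and n p q :: nat
  assumes "\<forall>i\<in>{1..n}. x i > 0"
    and "\<forall>i j. 1 \<le> i \<and> i \<le> j \<and> j \<le> n \<longrightarrow> x j \<le> x i"
    and "(\<Sum>i=1..n. x i) = 2 * n - 2"
    and "p \<ge> q" and "q > 1" and "p + q = n + 1"
  shows "\<exists>a b :: nat \<Rightarrow> nat.
           (\<forall>i\<in>{1..p}. a i > 0) \<and> (\<forall>i\<in>{1..q}. b i > 0) \<and>
           (\<Sum>i=1..p. a i) = 2 * p - 2 \<and> (\<Sum>i=1..q. b i) = 2 * q - 2 \<and>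
           a 1 + b 1 = x 1 \<and>
           image_mset a (mset_set {2..p}) + image_mset b (mset_set {2..q})
             = image_mset x (mset_set {2..n})"
proof -
  note pos = assms(1) and mono = assms(2)
  have n3: "n \<ge> 3" "p \<ge> 2" "q \<ge> 2" using assms(4-6) by linarith+
  have x1: "x 1 > 0" using pos n3 by auto
  define T where "T = (\<Sum>i=2..n. x i)"
  have "(\<Sum>i=1..n. x i) = x 1 + (\<Sum>i=2..n. x i)"
    using split_ivl[of 1 1 n x] n3 by (simp add: numeral_2_eq_2)
  hence Tx: "T + x 1 = 2 * n - 2" using assms(3) by (simp add: T_def)
  define s where "s m = (\<Sum>i=m+2..m+q. x i)" for m
  define R where "R m = (\<Sum>i=2..m+1. x i) + (\<Sum>i=m+q+1..n. x i)" for m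
  have TR: "T = R m + s m" if "m \<le> p - 1" for m
  proof -
    have "T = (\<Sum>i=2..m+1. x i) + (\<Sum>i=m+1+1..n. x i)"
      unfolding T_def using that n3 assms(6) by (intro split_ivl) auto
    also have "(\<Sum>i=m+1+1..n. x i) = (\<Sum>i=m+2..m+q. x i) + (\<Sum>i=m+q+1..n. x i)"
      using that n3 assms(6) split_ivl[of "m+2" "m+q" n x] by simp
    finally show ?thesis by (simp add: R_def s_def)
  qed
  have s_last: "s (p-1) + 3 \<le> 2 * q"
  proof (rule ccontr)
    assume H: "\<not> s (p-1) + 3 \<le> 2 * q"
    have "s (p-1) = (\<Sum>i=p+1..n. x i)" unfolding s_def using n3 assms(6)
      by (intro sum.cong) auto
    hence "(\<Sum>i=p+1..n. x i) \<ge> 2 * (n - p)" using H assms(6) by linarith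
    hence "(\<Sum>i=2..n. x i) \<ge> 2 * (n - 1)"
      using n3 assms(6) by (intro tail_bound[OF pos mono]) auto
    thus False using Tx x1 unfolding T_def by linarith
  qed
  have s_first: "s 0 + x 1 \<ge> 2 * q - 1"
  proof (rule ccontr)
    assume H: "\<not> s 0 + x 1 \<ge> 2 * q - 1"
    have "R 0 = (\<Sum>i=q+1..n. x i)" unfolding R_def by simp
    moreover have "T = R 0 + s 0" using TR by simp
    ultimately have "(\<Sum>i=q+1..n. x i) \<ge> 2 * (n - q)" using H Tx assms(6) n3 by linarith
    hence "(\<Sum>i=2..n. x i) \<ge> 2 * (n - 1)"
      using n3 assms(4,6) by (intro tail_bound[OF pos mono]) auto
    thus False using Tx x1 unfolding T_def by linarith
  qed
  have step: "s m + 1 \<le> s (m+1) + x 1" if "m + 1 \<le> p - 1" for m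
  proof -
    have "s m = (\<Sum>i=m+2..m+2. x i) + (\<Sum>i=m+2+1..m+q. x i)"
      unfolding s_def using n3 by (intro split_ivl) auto
    moreover have "s (m+1) = (\<Sum>i=m+3..m+q. x i) + (\<Sum>i=m+q+1..m+q+1. x i)"
      unfolding s_def using n3 split_ivl[of "m+3" "m+q" "m+q+1" x] by (simp add: numeral_3_eq_3)
    moreover have "x (m+2) \<le> x 1" using mono[rule_format, of 1 "m+2"] that assms(6) n3 by auto
    moreover have "x (m+q+1) > 0" using pos that assms(6) by auto
    ultimately show ?thesis by (simp add: numeral_3_eq_3)
  qed
  define m where "m = (LEAST m. s m + 3 \<le> 2 * q)"
  have m1: "s m + 3 \<le> 2 * q" unfolding m_def by (rule LeastI[of _ "p-1"]) (rule s_last)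
  have m2: "m \<le> p - 1" unfolding m_def by (rule Least_le) (rule s_last)
  have m3: "s m + x 1 \<ge> 2 * q - 1"
  proof (cases "m = 0")
    case True thus ?thesis using s_first by simp
  next
    case False
    have "\<not> s (m-1) + 3 \<le> 2 * q" unfolding m_def
      by (rule not_less_Least) (use False m_def in auto)
    moreover have "s (m-1) + 1 \<le> s (m-1+1) + x 1" using False m2 by (intro step) auto
    ultimately show ?thesis using False by simp
  qed
  have TRm: "T = R m + s m" using TR m2 by simp
  have Rle: "R m + 3 \<le> 2 * p" using TRm Tx m3 assms(6) n3 by linarith
  define b where "b i = (if i = 1 then 2 * q - 2 - s m else x (i + m))" for i
  define a where "a i = (if i = 1 then 2 * p - 2 - R m else if i \<le> m + 1 then x i else x (i + (q - 1)))" for i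
  have MB: "image_mset b (mset_set {2..q}) = image_mset x (mset_set {m+2..m+q})"
  proof -
    have "image_mset b (mset_set {2..q}) = image_mset (\<lambda>i. x (i + m)) (mset_set {2..q})"
      by (rule image_mset_cong) (auto simp: b_def)
    also have "\<dots> = image_mset x (mset_set {2+m..q+m})" by (rule shift_mset)
    finally show ?thesis by (simp add: add.commute)
  qed
  have MA: "image_mset a (mset_set {2..p}) = image_mset x (mset_set {2..m+1}) + image_mset x (mset_set {m+q+1..n})"
  proof -
    have "mset_set {2..p} = mset_set {2..m+1} + mset_set {m+1+1..p}"
      using m2 n3 by (intro mset_split) auto
    hence "image_mset a (mset_set {2..p}) = image_mset a (mset_set {2..m+1}) + image_mset a (mset_set {m+2..p})"
      by simp
    also have "image_mset a (mset_set {2..m+1}) = image_mset x (mset_set {2..m+1})"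
      by (rule image_mset_cong) (auto simp: a_def)
    also have "image_mset a (mset_set {m+2..p}) = image_mset (\<lambda>i. x (i + (q - 1))) (mset_set {m+2..p})"
      by (rule image_mset_cong) (auto simp: a_def)
    also have "\<dots> = image_mset x (mset_set {m+2+(q-1)..p+(q-1)})" by (rule shift_mset)
    also have "{m+2+(q-1)..p+(q-1)} = {m+q+1..n}" using n3 assms(6) by auto
    finally show ?thesis .
  qed
  have MX: "mset_set {2..n} = mset_set {2..m+1} + mset_set {m+2..m+q} + mset_set {m+q+1..n}"
  proof -
    have "mset_set {2..n} = mset_set {2..m+1} + mset_set {m+1+1..n}"
      using m2 n3 assms(6) by (intro mset_split) auto
    also have "mset_set {m+1+1..n} = mset_set {m+2..m+q} + mset_set {m+q+1..n}"
      using m2 n3 assms(6) mset_split[of "m+2" "m+q" n] by simp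
    finally show ?thesis by (simp add: add.assoc)
  qed
  have sumB: "(\<Sum>i=2..q. b i) = s m"
    unfolding s_def by (simp add: sum_unfold_sum_mset MB)
  have sumA: "(\<Sum>i=2..p. a i) = R m"
    unfolding R_def by (simp add: sum_unfold_sum_mset MA)
  have sA: "(\<Sum>i=1..p. a i) = a 1 + (\<Sum>i=2..p. a i)"
    using split_ivl[of 1 1 p a] n3 by (simp add: numeral_2_eq_2)
  have sB: "(\<Sum>i=1..q. b i) = b 1 + (\<Sum>i=2..q. b i)"
    using split_ivl[of 1 1 q b] n3 by (simp add: numeral_2_eq_2)
  show ?thesis
  proof (intro exI conjI)
    show "\<forall>i\<in>{1..p}. a i > 0"
    proof
      fix i assume i: "i \<in> {1..p}"
      show "a i > 0"
      proof (cases "i = 1")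
        case True thus ?thesis using Rle by (simp add: a_def)
      next
        case False
        have "x i > 0" using pos i assms(6) n3 by auto
        moreover have "i + (q - 1) \<in> {1..n}" using i assms(6) n3 by auto
        hence "x (i + (q - 1)) > 0" using pos by blast
        ultimately show ?thesis using False i assms(6) by (auto simp: a_def)
      qed
    qed
    show "\<forall>i\<in>{1..q}. b i > 0"
    proof
      fix i assume i: "i \<in> {1..q}"
      show "b i > 0"
      proof (cases "i = 1")
        case True thus ?thesis using m1 by (simp add: b_def)
      next
        case False
        have "i + m \<in> {1..n}" using i assms(6) m2 n3 by auto
        hence "x (i + m) > 0" using pos by blast
        thus ?thesis using False by (auto simp: b_def)
      qed
    qed
    show "(\<Sum>i=1..p. a i) = 2 * p - 2" using sA sumA Rle by (simp add: a_def)
    show "(\<Sum>i=1..q. b i) = 2 * q - 2" using sB sumB m1 by (simp add: b_def)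
    show "a 1 + b 1 = x 1" using Rle m1 TRm Tx assms(6) by (simp add: a_def b_def)
    show "image_mset a (mset_set {2..p}) + image_mset b (mset_set {2..q}) = image_mset x (mset_set {2..n})"
      by (simp add: MA MB MX add_ac)
  qed
qed

end
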